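(* Let $n\ge 2$, $t\ge 1$ be integers and $q$ a prime power, and let $\mathcal{D}$ be the Desarguesian $(t-1)$-spread of $\mathrm{PG}(nt-1,q)$. Let $B$ be a minimal blocking set with respect to the hyperplanes of $\mathrm{PG}(n-1,q^t)$. Then there exists a minimal blocking set $B'$ with respect to $(nt-t-1)$-dimensional subspaces of $\mathrm{PG}(nt-1,q)$ such that $B=\mathcal{B}(B')$.
   Context: Field reduction: each point of $\mathrm{PG}(n-1,q^t)$ is a $1$-dimensional $\mathbb{F}_{q^t}$-subspace of $\mathbb{F}_{q^t}^n$, hence a $t$-dimensional $\mathbb{F}_q$-subspace of $\mathbb{F}_q^{nt}$, i.e. a $(t-1)$-dimensional subspace of $\mathrm{PG}(nt-1,q)$; the set $\mathcal{D}$ of these $(t-1)$-spaces partitions the points of $\mathrm{PG}(nt-1,q)$ (the Desarguesian $(t-1)$-spread). For $U\subseteq\mathrm{PG}(nt-1,q)$, $\mathcal{B}(U)$ is the set of elements of $\mathcal{D}$ meeting $U$, identified with the corresponding points of $\mathrm{PG}(n-1,q^t)$. A blocking set with respect to $j$-spaces is a point set meeting every $j$-dimensional subspace; minimal means no proper subset is such a blocking set. *)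

theory Defs
  imports Main
begin

text \<open>K is a finite field (the type 'a), F \<subseteq> K a subfield with
 |F| = q, |K| = q^t. The ambient space is K^n, realised as functions nat \<Rightarrow> 'a supported on
 {..<n}. Subspaces over a subfield S (S = UNIV gives K-subspaces, S = F gives F-subspaces);
 projective dimension j corresponds to vector dimension j+1.\<close>

definition subfield :: "'a::field set \<Rightarrow> bool" where
  "subfield F \<longleftrightarrow> 0 \<in> F \<and> 1 \<in> F \<and> (\<forall>x\<in>F. \<forall>y\<in>F. x + y \<in> F \<and> x * y \<in> F)
     \<and> (\<forall>x\<in>F. - x \<in> F \<and> inverse x \<in> F)"

definition vecs :: "nat \<Rightarrow> (nat \<Rightarrow> 'a::field) set" where
  "vecs n = {v. \<forall>i\<ge>n. v i = 0}"

definition vzero :: "nat \<Rightarrow> 'a::field" where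
  "vzero = (\<lambda>_. 0)"

definition vadd :: "(nat \<Rightarrow> 'a::field) \<Rightarrow> (nat \<Rightarrow> 'a) \<Rightarrow> (nat \<Rightarrow> 'a)" where
  "vadd x y = (\<lambda>i. x i + y i)"

definition vsmult :: "'a::field \<Rightarrow> (nat \<Rightarrow> 'a) \<Rightarrow> (nat \<Rightarrow> 'a)" where
  "vsmult c x = (\<lambda>i. c * x i)"

definition subsp :: "'a::field set \<Rightarrow> nat \<Rightarrow> (nat \<Rightarrow> 'a) set \<Rightarrow> bool" where
  "subsp S n W \<longleftrightarrow> W \<subseteq> vecs n \<and> vzero \<in> W \<and> (\<forall>x\<in>W. \<forall>y\<in>W. vadd x y \<in> W)
     \<and> (\<forall>c\<in>S. \<forall>x\<in>W. vsmult c x \<in> W)"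

definition lin_comb :: "(nat \<Rightarrow> 'a::field) set \<Rightarrow> ((nat \<Rightarrow> 'a) \<Rightarrow> 'a) \<Rightarrow> (nat \<Rightarrow> 'a)" where
  "lin_comb A c = (\<lambda>i. \<Sum>a\<in>A. c a * a i)"

definition span_over :: "'a::field set \<Rightarrow> (nat \<Rightarrow> 'a) set \<Rightarrow> (nat \<Rightarrow> 'a) set" where
  "span_over S A = {v. \<exists>c. (\<forall>a\<in>A. c a \<in> S) \<and> v = lin_comb A c}"

definition indep_over :: "'a::field set \<Rightarrow> (nat \<Rightarrow> 'a) set \<Rightarrow> bool" where
  "indep_over S A \<longleftrightarrow> (\<forall>c. (\<forall>a\<in>A. c a \<in> S) \<longrightarrow> lin_comb A c = vzero \<longrightarrow> (\<forall>a\<in>A. c a = 0))"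

definition has_dim :: "'a::field set \<Rightarrow> nat \<Rightarrow> (nat \<Rightarrow> 'a) set \<Rightarrow> nat \<Rightarrow> bool" where
  "has_dim S n W d \<longleftrightarrow> subsp S n W \<and>
     (\<exists>A. finite A \<and> A \<subseteq> W \<and> card A = d \<and> indep_over S A \<and> span_over S A = W)"

text \<open>Points of the projective space PG(n-1,K) (S = UNIV) resp. PG(nt-1,F) (S = F).\<close>
definition proj_points :: "'a::field set \<Rightarrow> nat \<Rightarrow> (nat \<Rightarrow> 'a) set set" where
  "proj_points S n = {P. has_dim S n P 1}"

text \<open>B meets every subspace of vector dimension d (= projective dimension d-1).\<close>
definition blocks :: "'a::field set \<Rightarrow> nat \<Rightarrow> nat \<Rightarrow> (nat \<Rightarrow> 'a) set set \<Rightarrow> bool" where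
  "blocks S n d B \<longleftrightarrow> B \<subseteq> proj_points S n \<and> (\<forall>W. has_dim S n W d \<longrightarrow> (\<exists>P\<in>B. P \<subseteq> W))"

definition min_blocking :: "'a::field set \<Rightarrow> nat \<Rightarrow> nat \<Rightarrow> (nat \<Rightarrow> 'a) set set \<Rightarrow> bool" where
  "min_blocking S n d B \<longleftrightarrow> blocks S n d B \<and> (\<forall>B0. B0 \<subset> B \<longrightarrow> \<not> blocks S n d B0)"

text \<open>Field reduction: a K-point P (a 1-dim K-subspace) is, as an F-subspace, an element of the
 Desarguesian spread. \<B>(U) = the spread elements meeting U, i.e. K-points containing an F-point of U.\<close>
definition BU :: "nat \<Rightarrow> (nat \<Rightarrow> 'a::field) set set \<Rightarrow> (nat \<Rightarrow> 'a) set set" where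
  "BU n U = {P \<in> proj_points UNIV n. \<exists>Q\<in>U. Q \<subseteq> P}"

end

theory Submission
  imports Defs "HOL-Library.FuncSet"
begin

lemma vadd_apply: "vadd x y i = x i + y i" by (simp add: vadd_def)
lemma vsmult_apply: "vsmult c x i = c * x i" by (simp add: vsmult_def)
lemma vzero_apply: "vzero i = 0" by (simp add: vzero_def)
lemma lin_comb_apply: "lin_comb A c i = (\<Sum>a\<in>A. c a * a i)" by (simp add: lin_comb_def)
lemmas vsimps = vadd_apply vsmult_apply vzero_apply lin_comb_apply

lemma sf0: "subfield S \<Longrightarrow> 0 \<in> S" by (simp add: subfield_def)
lemma sf1: "subfield S \<Longrightarrow> 1 \<in> S" by (simp add: subfield_def)
lemma sfadd: "subfield S \<Longrightarrow> x \<in> S \<Longrightarrow> y \<in> S \<Longrightarrow> x + y \<in> S" by (simp add: subfield_def)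
lemma sfmult: "subfield S \<Longrightarrow> x \<in> S \<Longrightarrow> y \<in> S \<Longrightarrow> x * y \<in> S" by (simp add: subfield_def)
lemma sfneg: "subfield S \<Longrightarrow> x \<in> S \<Longrightarrow> - x \<in> S" by (simp add: subfield_def)
lemma sfinv: "subfield S \<Longrightarrow> x \<in> S \<Longrightarrow> inverse x \<in> S" by (simp add: subfield_def)
lemma sfdiff: "subfield S \<Longrightarrow> x \<in> S \<Longrightarrow> y \<in> S \<Longrightarrow> x - y \<in> S"
  by (metis sfadd sfneg diff_conv_add_uminus)
lemma sfdiv: "subfield S \<Longrightarrow> x \<in> S \<Longrightarrow> y \<in> S \<Longrightarrow> x / y \<in> S"
  by (metis sfmult sfinv divide_inverse)
lemma subfield_UNIV: "subfield UNIV" by (simp add: subfield_def)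

lemma subsp_add: "subsp S n W \<Longrightarrow> x \<in> W \<Longrightarrow> y \<in> W \<Longrightarrow> vadd x y \<in> W" by (simp add: subsp_def)
lemma subsp_smult: "subsp S n W \<Longrightarrow> c \<in> S \<Longrightarrow> x \<in> W \<Longrightarrow> vsmult c x \<in> W" by (simp add: subsp_def)
lemma subsp_zero: "subsp S n W \<Longrightarrow> vzero \<in> W" by (simp add: subsp_def)
lemma subsp_vecs: "subsp S n W \<Longrightarrow> W \<subseteq> vecs n" by (simp add: subsp_def)

lemma subsp_diff:
  assumes "subsp S n W" "subfield S" "x \<in> W" "y \<in> W"
  shows "(\<lambda>i. x i - y i) \<in> W"
proof -
  have "vadd x (vsmult (-1) y) \<in> W"
    using assms by (metis subsp_add subsp_smult sfneg sf1)
  moreover have "vadd x (vsmult (-1) y) = (\<lambda>i. x i - y i)" by (rule ext) (simp add: vsimps)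
  ultimately show ?thesis by simp
qed

lemma vecs_mem: "v \<in> vecs n \<longleftrightarrow> (\<forall>i\<ge>n. v i = 0)" by (simp add: vecs_def)

lemma vecs_image: "vecs n = (\<lambda>g i. if i < n then g i else 0) ` ({..<n} \<rightarrow>\<^sub>E (UNIV::'a::field set))"
proof
  show "vecs n \<subseteq> (\<lambda>g i. if i < n then g i else 0) ` ({..<n} \<rightarrow>\<^sub>E (UNIV::'a set))"
  proof
    fix v :: "nat \<Rightarrow> 'a" assume v: "v \<in> vecs n"
    have "restrict v {..<n} \<in> {..<n} \<rightarrow>\<^sub>E (UNIV::'a set)" by simp
    moreover have e: "v = (\<lambda>i. if i < n then restrict v {..<n} i else 0)"
      using v by (auto simp: vecs_mem)
    ultimately show "v \<in> (\<lambda>g i. if i < n then g i else 0) ` ({..<n} \<rightarrow>\<^sub>E UNIV)"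
      by (rule image_eqI[where f="\<lambda>g i. if i < n then g i else (0::'a)", rotated])
  qed
next
  show "(\<lambda>g i. if i < n then g i else 0) ` ({..<n} \<rightarrow>\<^sub>E (UNIV::'a set)) \<subseteq> vecs n"
  proof (rule subsetI)
    fix v assume "v \<in> (\<lambda>g i. if i < n then g i else 0) ` ({..<n} \<rightarrow>\<^sub>E (UNIV::'a set))"
    then obtain g where "v = (\<lambda>i. if i < n then g i else 0)" by (rule imageE)
    then show "v \<in> vecs n" by (simp add: vecs_mem)
  qed
qed

lemma vecs_inj: "inj_on (\<lambda>g (i::nat). if i < n then g i else (0::'a::field)) ({..<n} \<rightarrow>\<^sub>E UNIV)"
proof (rule inj_onI)
  fix f g :: "nat \<Rightarrow> 'a" assume f: "f \<in> {..<n} \<rightarrow>\<^sub>E UNIV" and g: "g \<in> {..<n} \<rightarrow>\<^sub>E UNIV"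
    and e: "(\<lambda>i. if i < n then f i else 0) = (\<lambda>i. if i < n then g i else 0)"
  show "f = g"
  proof (rule PiE_ext[OF f g])
    fix i assume "i \<in> {..<n}" then show "f i = g i" using fun_cong[OF e, of i] by simp
  qed
qed

lemma finite_vecs: "finite (vecs n :: (nat \<Rightarrow> 'a::{field,finite}) set)"
  by (simp add: vecs_image finite_PiE)

lemma card_vecs: "card (vecs n :: (nat \<Rightarrow> 'a::{field,finite}) set) = card (UNIV::'a set) ^ n"
  by (simp add: vecs_image card_image[OF vecs_inj] card_PiE)

lemma lin_comb_empty: "lin_comb {} c = vzero" by (rule ext) (simp add: vsimps)
lemma lin_comb_insert: "finite A \<Longrightarrow> a \<notin> A \<Longrightarrow>
    lin_comb (insert a A) c = vadd (vsmult (c a) a) (lin_comb A c)"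
  by (rule ext) (simp add: vsimps)

lemma lin_comb_mem:
  assumes "subsp S n W" "finite A" "A \<subseteq> W" "\<forall>a\<in>A. c a \<in> S"
  shows "lin_comb A c \<in> W"
  using assms(2,3,4)
proof (induction A rule: finite_induct)
  case empty then show ?case using assms(1) subsp_zero[of S n W] by (simp add: lin_comb_empty vzero_def)
next
  case (insert x F)
  then show ?case using assms(1) by (simp add: lin_comb_insert subsp_add subsp_smult)
qed

lemma span_sub: "subsp S n W \<Longrightarrow> finite A \<Longrightarrow> A \<subseteq> W \<Longrightarrow> span_over S A \<subseteq> W"
  unfolding span_over_def using lin_comb_mem by blast

lemma lin_comb_restrict: "lin_comb A (restrict c A) = lin_comb A c"
  unfolding lin_comb_def by (rule ext) (rule sum.cong, auto)

lemma span_image: "span_over S A = lin_comb A ` (A \<rightarrow>\<^sub>E S)"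
proof
  show "span_over S A \<subseteq> lin_comb A ` (A \<rightarrow>\<^sub>E S)"
  proof
    fix v assume "v \<in> span_over S A"
    then obtain c where c: "\<forall>a\<in>A. c a \<in> S" "v = lin_comb A c" by (auto simp: span_over_def)
    then have "restrict c A \<in> A \<rightarrow>\<^sub>E S" by auto
    then show "v \<in> lin_comb A ` (A \<rightarrow>\<^sub>E S)" using c(2) lin_comb_restrict[of A c]
      by (intro image_eqI[where f="lin_comb A" and x="restrict c A"]) auto
  qed
next
  show "lin_comb A ` (A \<rightarrow>\<^sub>E S) \<subseteq> span_over S A"
  proof (rule subsetI)
    fix v assume "v \<in> lin_comb A ` (A \<rightarrow>\<^sub>E S)"
    then obtain c where c: "c \<in> A \<rightarrow>\<^sub>E S" "v = lin_comb A c" by (rule imageE)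
    then have "\<forall>a\<in>A. c a \<in> S" using c(1) by (auto simp: PiE_iff)
    then show "v \<in> span_over S A" using c(2) unfolding span_over_def by blast
  qed
qed

lemma indep_inj:
  assumes "subfield S" "indep_over S A"
  shows "inj_on (lin_comb A) (A \<rightarrow>\<^sub>E S)"
proof (rule inj_onI)
  fix c d assume c: "c \<in> A \<rightarrow>\<^sub>E S" and d: "d \<in> A \<rightarrow>\<^sub>E S" and e: "lin_comb A c = lin_comb A d"
  let ?e = "\<lambda>a. c a - d a"
  have e1: "lin_comb A ?e = vzero"
  proof (rule ext)
    fix i
    have "lin_comb A ?e i = lin_comb A c i - lin_comb A d i"
      by (simp add: lin_comb_apply left_diff_distrib sum_subtractf)
    then show "lin_comb A ?e i = vzero i" using e by (simp add: vzero_apply)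
  qed
  have e2: "\<forall>a\<in>A. ?e a \<in> S" using c d assms(1) by (auto intro: sfdiff)
  have H: "\<And>c. (\<forall>a\<in>A. c a \<in> S) \<Longrightarrow> lin_comb A c = vzero \<Longrightarrow> \<forall>a\<in>A. c a = 0"
    using assms(2) unfolding indep_over_def by blast
  have "\<forall>a\<in>A. ?e a = 0" using H[of ?e, OF e2 e1] .
  then have cd: "\<forall>a\<in>A. c a = d a" by (simp only: right_minus_eq)
  show "c = d"
  proof (rule PiE_ext[OF c d])
    fix a assume "a \<in> A" then show "c a = d a" using cd by blast
  qed
qed

lemma card_span:
  assumes "subfield S" "finite S" "finite A" "indep_over S A"
  shows "card (span_over S A) = card S ^ card A"
proof -
  have "card (span_over S A) = card (A \<rightarrow>\<^sub>E S)"
    unfolding span_image by (rule card_image[OF indep_inj[OF assms(1,4)]])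
  also have "\<dots> = card S ^ card A" using card_PiE[OF assms(3), of "\<lambda>_. S"] by simp
  finally show ?thesis .
qed

lemma has_dim_card:
  assumes "subfield S" "finite S" "has_dim S n W d"
  shows "card W = card S ^ d"
proof -
  obtain A where A: "finite A" "A \<subseteq> W" "card A = d" "indep_over S A" "span_over S A = W"
    using assms(3) unfolding has_dim_def by blast
  show ?thesis using card_span[OF assms(1,2) A(1,4)] A by simp
qed


lemma mem_span:
  assumes "finite A" "subfield S" "a \<in> A"
  shows "a \<in> span_over S A"
proof -
  let ?c = "\<lambda>x. if x = a then (1::'a) else 0"
  have "lin_comb A ?c = a"
  proof (rule ext)
    fix i
    have "lin_comb A ?c i = (\<Sum>x\<in>A. if x = a then a i else 0)"
      unfolding lin_comb_apply by (rule sum.cong) auto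
    then show "lin_comb A ?c i = a i" using assms(1,3) by simp
  qed
  moreover have "\<forall>x\<in>A. ?c x \<in> S" using sf0[OF assms(2)] sf1[OF assms(2)] by simp
  ultimately have "\<exists>c. (\<forall>x\<in>A. c x \<in> S) \<and> a = lin_comb A c" by (intro exI[of _ ?c]) simp
  then show ?thesis by (simp add: span_over_def)
qed

lemma indep_insert:
  assumes "subfield S" "finite A" "indep_over S A" "v \<notin> span_over S A"
  shows "indep_over S (insert v A)" and "v \<notin> A"
proof -
  show vA: "v \<notin> A" using mem_span assms by blast
  show "indep_over S (insert v A)" unfolding indep_over_def
  proof (intro allI impI)
    fix c assume cS: "\<forall>a\<in>insert v A. c a \<in> S" and z: "lin_comb (insert v A) c = vzero"
    have z': "c v * v i + lin_comb A c i = 0" for i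
      using fun_cong[OF z, of i] by (simp add: lin_comb_apply vzero_apply sum.insert[OF assms(2) vA])
    have cv: "c v = 0"
    proof (rule ccontr)
      assume ne: "c v \<noteq> 0"
      let ?d = "\<lambda>a. - c a / c v"
      have "v = lin_comb A ?d"
      proof (rule ext)
        fix i
        have "lin_comb A ?d i = - (lin_comb A c i) / c v"
          by (simp add: lin_comb_apply sum_divide_distrib sum_negf)
        also have "\<dots> = v i"
        proof -
          have L: "lin_comb A c i = - (c v * v i)" using z'[of i] by (simp add: add_eq_0_iff)
          show ?thesis using ne by (simp add: L)
        qed
        finally show "v i = lin_comb A ?d i" by simp
      qed
      moreover have "\<forall>a\<in>A. ?d a \<in> S" using cS ne assms(1) by (auto intro!: sfdiv sfneg)
      ultimately have "\<exists>c. (\<forall>a\<in>A. c a \<in> S) \<and> v = lin_comb A c" by (intro exI[of _ ?d]) blast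
      then have "v \<in> span_over S A" by (simp add: span_over_def)
      then show False using assms(4) by blast
    qed
    have z0: "lin_comb A c = vzero"
    proof (rule ext)
      fix i show "lin_comb A c i = vzero i" using z'[of i] cv by (simp add: vzero_apply)
    qed
    have H: "\<And>c. (\<forall>a\<in>A. c a \<in> S) \<Longrightarrow> lin_comb A c = vzero \<Longrightarrow> \<forall>a\<in>A. c a = 0"
      using assms(3) unfolding indep_over_def by blast
    have cA: "\<forall>a\<in>A. c a \<in> S" using cS by blast
    have "\<forall>a\<in>A. c a = 0" by (rule H[OF cA z0])
    then show "\<forall>a\<in>insert v A. c a = 0" using cv by blast
  qed
qed

lemma finite_subsp: "subsp S n W \<Longrightarrow> finite (W :: (nat \<Rightarrow> 'a::{field,finite}) set)"
  using finite_vecs subsp_vecs finite_subset by metis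

lemma exists_basis:
  fixes W :: "(nat \<Rightarrow> 'a::{field,finite}) set"
  assumes "subfield S" "subsp S n W"
  shows "\<exists>A. finite A \<and> A \<subseteq> W \<and> indep_over S A \<and> span_over S A = W"
proof -
  let ?I = "{A. A \<subseteq> W \<and> indep_over S A}"
  have fW: "finite W" using finite_subsp[OF assms(2)] .
  have "?I \<subseteq> Pow W" by blast
  then have fI: "finite ?I" using fW finite_subset by blast
  have e: "{} \<in> ?I" unfolding indep_over_def by simp
  define m where "m = Max (card ` ?I)"
  have "m \<in> card ` ?I" unfolding m_def using fI e by (intro Max_in) auto
  then obtain A where A: "A \<in> ?I" "card A = m" by blast
  have Amax: "card B \<le> card A" if "B \<in> ?I" for B
    using A(2) fI that unfolding m_def by (simp add: Max_ge)
  have AW: "A \<subseteq> W" and Ai: "indep_over S A" using A(1) by auto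
  have fA: "finite A" using AW fW finite_subset by blast
  have "span_over S A = W"
  proof
    show "span_over S A \<subseteq> W" by (rule span_sub[OF assms(2) fA AW])
    show "W \<subseteq> span_over S A"
    proof
      fix v assume vW: "v \<in> W"
      show "v \<in> span_over S A"
      proof (rule ccontr)
        assume nv: "v \<notin> span_over S A"
        have "insert v A \<in> ?I" using indep_insert(1)[OF assms(1) fA Ai nv] AW vW by blast
        then have "card (insert v A) \<le> card A" by (rule Amax)
        moreover have "card (insert v A) = Suc (card A)"
          using indep_insert(2)[OF assms(1) fA Ai nv] fA by simp
        ultimately show False by simp
      qed
    qed
  qed
  then show ?thesis using fA AW Ai by blast
qed

lemma card_S_ge2:
  assumes "subfield (S::'a::{field,finite} set)"
  shows "2 \<le> card S"
proof -
  have "{0,1} \<subseteq> S" using sf0[OF assms] sf1[OF assms] by blast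
  then have "card {0::'a,1} \<le> card S" by (intro card_mono) auto
  then show ?thesis by simp
qed

lemma subsp_card_pow:
  fixes W :: "(nat \<Rightarrow> 'a::{field,finite}) set"
  assumes "subfield S" "subsp S n W"
  shows "\<exists>k. card W = card S ^ k"
proof -
  obtain A where "finite A" "A \<subseteq> W" "indep_over S A" "span_over S A = W"
    using exists_basis[OF assms] by blast
  then show ?thesis using card_span[OF assms(1) finite] by metis
qed

lemma has_dim_of_card:
  fixes W :: "(nat \<Rightarrow> 'a::{field,finite}) set"
  assumes "subfield S" "subsp S n W" "card W = card S ^ d"
  shows "has_dim S n W d"
proof -
  obtain A where A: "finite A" "A \<subseteq> W" "indep_over S A" "span_over S A = W"
    using exists_basis[OF assms(1,2)] by blast
  have "card W = card S ^ card A" using card_span[OF assms(1) finite A(1,3)] A(4) by simp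
  then have "card S ^ card A = card S ^ d" using assms(3) by simp
  then have "card A = d" using card_S_ge2[OF assms(1)] by (simp add: power_inject_exp)
  then show ?thesis unfolding has_dim_def using assms(2) A by blast
qed


definition line :: "'a::field set \<Rightarrow> (nat \<Rightarrow> 'a) \<Rightarrow> (nat \<Rightarrow> 'a) set" where
  "line S v = (\<lambda>c. vsmult c v) ` S"

lemma line_iff: "w \<in> line S v \<longleftrightarrow> (\<exists>c\<in>S. w = vsmult c v)"
  unfolding line_def by blast

lemma lin_comb_single: "lin_comb {a} c = vsmult (c a) a"
  by (rule ext) (simp add: vsimps)

lemma span_single: "span_over S {a} = line S a"
proof (intro set_eqI iffI)
  fix v assume "v \<in> span_over S {a}"
  then obtain c where c: "\<forall>x\<in>{a}. c x \<in> S" "v = lin_comb {a} c" by (auto simp: span_over_def)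
  then have "c a \<in> S" "v = vsmult (c a) a" by (auto simp: lin_comb_single)
  then show "v \<in> line S a" unfolding line_iff by blast
next
  fix v assume "v \<in> line S a"
  then obtain d where d: "d \<in> S" "v = vsmult d a" unfolding line_iff by blast
  then have "\<exists>c. (\<forall>x\<in>{a}. c x \<in> S) \<and> v = lin_comb {a} c"
    by (intro exI[of _ "\<lambda>_. d"]) (simp add: lin_comb_single)
  then show "v \<in> span_over S {a}" by (simp add: span_over_def)
qed

lemma vsmult_vecs: "v \<in> vecs n \<Longrightarrow> vsmult c v \<in> vecs n"
  by (simp add: vecs_mem vsmult_apply)

lemma vsmult_one: "vsmult 1 v = v" by (rule ext) (simp add: vsmult_apply)
lemma vsmult_zero: "vsmult 0 v = vzero" by (rule ext) (simp add: vsmult_apply vzero_apply)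
lemma vsmult_assoc: "vsmult a (vsmult b v) = vsmult (a * b) v" by (rule ext) (simp add: vsmult_apply)
lemma vsmult_distr: "vadd (vsmult a v) (vsmult b v) = vsmult (a + b) v"
  by (rule ext) (simp add: vsimps algebra_simps)

lemma vsmult_eq_zero:
  assumes "vsmult c v = vzero" "v \<noteq> vzero"
  shows "c = 0"
proof -
  have "\<exists>i. v i \<noteq> 0"
  proof (rule ccontr)
    assume "\<nexists>i. v i \<noteq> 0"
    then have "v = vzero" by (intro ext) (simp add: vzero_apply)
    with assms(2) show False by simp
  qed
  then obtain i where "v i \<noteq> 0" by blast
  moreover have "c * v i = 0" using fun_cong[OF assms(1), of i] by (simp add: vsimps)
  ultimately show ?thesis by simp
qed

lemma point_line:
  assumes "has_dim S n P 1" "subfield S"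
  shows "\<exists>v\<in>vecs n. v \<noteq> vzero \<and> P = line S v"
proof -
  obtain A where A: "subsp S n P" "finite A" "A \<subseteq> P" "card A = 1" "indep_over S A" "span_over S A = P"
    using assms(1) unfolding has_dim_def by blast
  then obtain a where a: "A = {a}" by (metis One_nat_def card_1_singleton_iff)
  have P: "P = line S a" using A(6) a span_single by metis
  have av: "a \<in> vecs n" using A(1,3) a subsp_vecs by blast
  have "a \<noteq> vzero"
  proof
    assume az: "a = vzero"
    have H: "\<And>c. (\<forall>x\<in>A. c x \<in> S) \<Longrightarrow> lin_comb A c = vzero \<Longrightarrow> \<forall>x\<in>A. c x = 0"
      using A(5) unfolding indep_over_def by blast
    have l1: "lin_comb A (\<lambda>_. 1) = vzero" unfolding a lin_comb_single vsmult_one az ..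
    have l2: "\<forall>x\<in>A. (\<lambda>_. (1::'a)) x \<in> S" using sf1[OF assms(2)] by simp
    have "\<forall>x\<in>A. (\<lambda>_. (1::'a)) x = 0" using H[of "\<lambda>_. 1", OF l2 l1] .
    then show False using a by simp
  qed
  then show ?thesis using P av by blast
qed

lemma line_subsp:
  assumes "subfield S" "v \<in> vecs n"
  shows "subsp S n (line S v)"
  unfolding subsp_def
proof (intro conjI ballI)
  show "line S v \<subseteq> vecs n" using assms(2) vsmult_vecs by (auto simp: line_iff)
  show "vzero \<in> line S v" unfolding line_iff using sf0[OF assms(1)] vsmult_zero by metis
  fix x y assume "x \<in> line S v" "y \<in> line S v"
  then obtain a b where "a \<in> S" "x = vsmult a v" "b \<in> S" "y = vsmult b v" unfolding line_iff by blast
  then show "vadd x y \<in> line S v" unfolding line_iff using vsmult_distr sfadd[OF assms(1)] by metis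
next
  fix c x assume "c \<in> S" "x \<in> line S v"
  then obtain a where "a \<in> S" "x = vsmult a v" unfolding line_iff by blast
  then show "vsmult c x \<in> line S v" unfolding line_iff using vsmult_assoc sfmult[OF assms(1)] \<open>c \<in> S\<close> by metis
qed

lemma line_mem: "subfield S \<Longrightarrow> v \<in> line S v"
  unfolding line_iff using sf1 vsmult_one by metis

lemma line_point:
  assumes "subfield S" "v \<in> vecs n" "v \<noteq> vzero"
  shows "has_dim S n (line S v) 1"
  unfolding has_dim_def
proof (intro conjI exI[of _ "{v}"])
  show "subsp S n (line S v)" by (rule line_subsp[OF assms(1,2)])
  show "{v} \<subseteq> line S v" using line_mem[OF assms(1)] by blast
  show "indep_over S {v}" unfolding indep_over_def lin_comb_single using vsmult_eq_zero assms(3) by blast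
  show "span_over S {v} = line S v" by (rule span_single)
qed auto

lemma line_sub: "subsp S n W \<Longrightarrow> v \<in> W \<Longrightarrow> line S v \<subseteq> W"
  unfolding line_def using subsp_smult by blast

lemma line_UNIV_eq:
  assumes "w \<in> line UNIV v" "w \<noteq> vzero"
  shows "line UNIV w = line UNIV v"
proof -
  obtain c where c: "w = vsmult c v" using assms(1) unfolding line_iff by blast
  have "c \<noteq> 0" using assms(2) c vsmult_zero by metis
  show ?thesis
  proof
    show "line UNIV w \<subseteq> line UNIV v"
    proof
      fix x assume "x \<in> line UNIV w"
      then obtain d where "x = vsmult d w" unfolding line_iff by blast
      then have "x = vsmult (d * c) v" unfolding c vsmult_assoc by simp
      then show "x \<in> line UNIV v" unfolding line_iff by blast
    qed
    show "line UNIV v \<subseteq> line UNIV w"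
    proof
      fix x assume "x \<in> line UNIV v"
      then obtain e where "x = vsmult e v" unfolding line_iff by blast
      then have "x = vsmult (e / c) w" using \<open>c \<noteq> 0\<close> unfolding c vsmult_assoc by simp
      then show "x \<in> line UNIV w" unfolding line_iff by blast
    qed
  qed
qed


lemma vadd_vecs: "x \<in> vecs n \<Longrightarrow> y \<in> vecs n \<Longrightarrow> vadd x y \<in> vecs n"
  by (simp add: vecs_mem vadd_apply)

lemma subsp_vecs_full: "subsp S n (vecs n)"
  unfolding subsp_def by (auto simp: vecs_mem vzero_apply vadd_apply vsmult_apply)

definition vplus :: "(nat \<Rightarrow> 'a::field) set \<Rightarrow> (nat \<Rightarrow> 'a) set \<Rightarrow> (nat \<Rightarrow> 'a) set" where
  "vplus A B = (\<lambda>(a, b). vadd a b) ` (A \<times> B)"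

lemma card_vplus:
  assumes "subfield S" "subsp S n A" "subsp S n B" "A \<inter> B \<subseteq> {vzero}" "finite A" "finite B"
  shows "card (vplus A B) = card A * card B"
proof -
  have "inj_on (\<lambda>(a, b). vadd a b) (A \<times> B)"
  proof (rule inj_onI, clarify)
    fix a b a' b' assume ab: "a \<in> A" "b \<in> B" "a' \<in> A" "b' \<in> B" and e: "vadd a b = vadd a' b'"
    have e': "a i - a' i = b' i - b i" for i using fun_cong[OF e, of i] by (simp add: vadd_apply algebra_simps)
    have "(\<lambda>i. a i - a' i) \<in> A" using subsp_diff[OF assms(2,1) ab(1,3)] .
    moreover have "(\<lambda>i. b' i - b i) \<in> B" using subsp_diff[OF assms(3,1) ab(4,2)] .
    ultimately have "(\<lambda>i. a i - a' i) \<in> A \<inter> B" using e' by simp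
    then have z: "(\<lambda>i. a i - a' i) = vzero" using assms(4) by blast
    have "a = a'" using fun_cong[OF z] by (intro ext) (simp add: vzero_apply)
    moreover have "b = b'" using fun_cong[OF z] e' by (intro ext) (simp add: vzero_apply)
    ultimately show "a = a' \<and> b = b'" by simp
  qed
  then show ?thesis unfolding vplus_def using card_image card_cartesian_product by metis
qed

lemma vplus_sub:
  assumes "subsp S n M" "A \<subseteq> M" "B \<subseteq> M"
  shows "vplus A B \<subseteq> M"
  unfolding vplus_def using assms subsp_add by fastforce

definition sumline :: "(nat \<Rightarrow> 'a::field) set \<Rightarrow> (nat \<Rightarrow> 'a) \<Rightarrow> 'a set \<Rightarrow> (nat \<Rightarrow> 'a) set" where
  "sumline M u S = (\<lambda>(c, m). vadd (vsmult c u) m) ` (S \<times> M)"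

lemma sumline_iff: "x \<in> sumline M u S \<longleftrightarrow> (\<exists>c\<in>S. \<exists>m\<in>M. x = vadd (vsmult c u) m)"
  unfolding sumline_def by force

lemma decomp_unique:
  assumes "subfield S" "subsp S n M" "u \<notin> M" "c \<in> S" "c' \<in> S" "m \<in> M" "m' \<in> M"
    "vadd (vsmult c u) m = vadd (vsmult c' u) m'"
  shows "c = c' \<and> m = m'"
proof -
  have e: "(c - c') * u i = m' i - m i" for i
    using fun_cong[OF assms(8), of i] by (simp add: vsimps algebra_simps)
  have cc: "c = c'"
  proof (rule ccontr)
    assume ne: "c \<noteq> c'"
    have w: "(\<lambda>i. m' i - m i) \<in> M" using subsp_diff[OF assms(2,1,7,6)] .
    have "u = vsmult (inverse (c - c')) (\<lambda>i. m' i - m i)"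
    proof (rule ext)
      fix i show "u i = vsmult (inverse (c - c')) (\<lambda>i. m' i - m i) i"
        using e[of i] ne by (simp add: vsmult_apply field_simps)
    qed
    moreover have "inverse (c - c') \<in> S" using assms(1,4,5) by (intro sfinv sfdiff)
    ultimately have "u \<in> M" using subsp_smult[OF assms(2) _ w] by simp
    then show False using assms(3) by simp
  qed
  moreover have "m = m'" using e cc by (intro ext) simp
  ultimately show ?thesis by simp
qed

lemma sumline_subsp:
  assumes "subfield S" "subsp S n M" "u \<in> vecs n"
  shows "subsp S n (sumline M u S)"
  unfolding subsp_def
proof (intro conjI ballI)
  show "sumline M u S \<subseteq> vecs n"
  proof
    fix x assume "x \<in> sumline M u S"
    then obtain c m where cm: "m \<in> M" "x = vadd (vsmult c u) m" unfolding sumline_iff by blast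
    have "m \<in> vecs n" using cm(1) subsp_vecs[OF assms(2)] by blast
    then show "x \<in> vecs n" unfolding cm(2) by (intro vadd_vecs vsmult_vecs assms(3))
  qed
  have "vzero = vadd (vsmult 0 u) vzero" by (rule ext) (simp add: vsimps)
  then show "vzero \<in> sumline M u S" unfolding sumline_iff
    using sf0[OF assms(1)] subsp_zero[OF assms(2)] by blast
  fix x y assume "x \<in> sumline M u S" "y \<in> sumline M u S"
  then obtain c m d m' where cm: "c \<in> S" "m \<in> M" "x = vadd (vsmult c u) m"
    "d \<in> S" "m' \<in> M" "y = vadd (vsmult d u) m'" unfolding sumline_iff by blast
  have "vadd x y = vadd (vsmult (c + d) u) (vadd m m')"
    unfolding cm by (rule ext) (simp add: vsimps algebra_simps)
  moreover have "c + d \<in> S" using sfadd[OF assms(1) cm(1,4)] .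
  moreover have "vadd m m' \<in> M" using subsp_add[OF assms(2) cm(2,5)] .
  ultimately show "vadd x y \<in> sumline M u S" unfolding sumline_iff by blast
next
  fix k x assume k: "k \<in> S" and "x \<in> sumline M u S"
  then obtain c m where cm: "c \<in> S" "m \<in> M" "x = vadd (vsmult c u) m" unfolding sumline_iff by blast
  have "vsmult k x = vadd (vsmult (k * c) u) (vsmult k m)"
    unfolding cm by (rule ext) (simp add: vsimps algebra_simps)
  moreover have "k * c \<in> S" using sfmult[OF assms(1) k cm(1)] .
  moreover have "vsmult k m \<in> M" using subsp_smult[OF assms(2) k cm(2)] .
  ultimately show "vsmult k x \<in> sumline M u S" unfolding sumline_iff by blast
qed

lemma card_sumline:
  assumes "subfield S" "subsp S n M" "u \<notin> M" "finite S" "finite M"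
  shows "card (sumline M u S) = card S * card M"
proof -
  have "inj_on (\<lambda>(c, m). vadd (vsmult c u) m) (S \<times> M)"
    using decomp_unique[OF assms(1,2,3)] by (intro inj_onI) auto
  then show ?thesis unfolding sumline_def using card_image card_cartesian_product by metis
qed

lemma M_sub_sumline: "subfield S \<Longrightarrow> M \<subseteq> sumline M u S"
proof
  fix m assume "subfield S" "m \<in> M"
  moreover have "m = vadd (vsmult 0 u) m" by (rule ext) (simp add: vsimps)
  ultimately show "m \<in> sumline M u S" unfolding sumline_iff using sf0 by blast
qed

lemma hyperplane_exists:
  fixes W :: "(nat \<Rightarrow> 'a::{field,finite}) set"
  assumes "subfield S" "subsp S n W" "W \<noteq> vecs n"
  shows "\<exists>M. subsp S n M \<and> W \<subseteq> M \<and> M \<noteq> vecs n \<and> card (vecs n :: (nat \<Rightarrow> 'a) set) = card S * card M"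
proof -
  let ?I = "{M. subsp S n M \<and> W \<subseteq> M \<and> M \<noteq> vecs n}"
  have "?I \<subseteq> Pow (vecs n)" using subsp_vecs by blast
  then have fI: "finite ?I" using finite_vecs finite_subset by (metis finite_Pow_iff)
  have e: "W \<in> ?I" using assms by blast
  define m where "m = Max (card ` ?I)"
  have "m \<in> card ` ?I" unfolding m_def using fI e by (intro Max_in) auto
  then obtain M where M: "M \<in> ?I" "card M = m" by blast
  have Mmax: "card B \<le> card M" if "B \<in> ?I" for B
    using M(2) fI that unfolding m_def by (simp add: Max_ge)
  have Ms: "subsp S n M" "W \<subseteq> M" "M \<noteq> vecs n" using M(1) by auto
  then obtain u where u: "u \<in> vecs n" "u \<notin> M" using subsp_vecs by blast
  let ?N = "sumline M u S"
  have fM: "finite M" using finite_subsp[OF Ms(1)] .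
  have cN: "card ?N = card S * card M" using card_sumline[OF assms(1) Ms(1) u(2) finite fM] .
  have "card M > 0" using fM subsp_zero[OF Ms(1)] card_gt_0_iff by blast
  then have lt: "card M < card ?N" using cN card_S_ge2[OF assms(1)] by simp
  have NW: "W \<subseteq> ?N" using Ms(2) M_sub_sumline[OF assms(1)] by blast
  have "?N = vecs n"
  proof (rule ccontr)
    assume "?N \<noteq> vecs n"
    then have "?N \<in> ?I" using sumline_subsp[OF assms(1) Ms(1) u(1)] NW by blast
    then have "card ?N \<le> card M" by (rule Mmax)
    then show False using lt by simp
  qed
  then have "card (vecs n :: (nat \<Rightarrow> 'a) set) = card S * card M" using cN by simp
  then show ?thesis using Ms by blast
qed


lemma card_fibers:
  assumes "finite X" "\<And>y. y \<in> f ` X \<Longrightarrow> card {x\<in>X. f x = y} \<le> k"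
  shows "card X \<le> card (f ` X) * k"
proof -
  have "X = (\<Union>y\<in>f ` X. {x\<in>X. f x = y})" by blast
  then have "card X = card (\<Union>y\<in>f ` X. {x\<in>X. f x = y})" by simp
  also have "\<dots> \<le> (\<Sum>y\<in>f ` X. card {x\<in>X. f x = y})"
    by (rule card_UN_le) (simp add: assms(1))
  also have "\<dots> \<le> card (f ` X) * k"
    using sum_bounded_above[of "f ` X" "\<lambda>y. card {x\<in>X. f x = y}" k] assms(2) by simp
  finally show ?thesis .
qed

locale hyp =
  fixes S :: "'a::{field,finite} set" and n :: nat and M :: "(nat \<Rightarrow> 'a) set" and u :: "nat \<Rightarrow> 'a"
  assumes sf: "subfield S" and Msub: "subsp S n M" and uv: "u \<in> vecs n" and uM: "u \<notin> M"
    and full: "sumline M u S = vecs n"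
begin

definition pi :: "(nat \<Rightarrow> 'a) \<Rightarrow> 'a" where
  "pi x = (THE c. c \<in> S \<and> (\<exists>m\<in>M. x = vadd (vsmult c u) m))"

lemma pi_eq:
  assumes "c \<in> S" "m \<in> M" "x = vadd (vsmult c u) m"
  shows "pi x = c"
  unfolding pi_def
proof (rule the_equality)
  show "c \<in> S \<and> (\<exists>m\<in>M. x = vadd (vsmult c u) m)" using assms by blast
  fix d assume "d \<in> S \<and> (\<exists>m\<in>M. x = vadd (vsmult d u) m)"
  then obtain m' where "d \<in> S" "m' \<in> M" "x = vadd (vsmult d u) m'" by blast
  then show "d = c" using decomp_unique[OF sf Msub uM] assms by metis
qed

lemma pi_ex:
  assumes "x \<in> vecs n"
  shows "pi x \<in> S \<and> (\<exists>m\<in>M. x = vadd (vsmult (pi x) u) m)"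
proof -
  have "x \<in> sumline M u S" using assms full by simp
  then obtain c m where "c \<in> S" "m \<in> M" "x = vadd (vsmult c u) m"
    unfolding sumline_iff by blast
  then show ?thesis using pi_eq by metis
qed

lemma pi_S: "x \<in> vecs n \<Longrightarrow> pi x \<in> S" using pi_ex by blast

lemma pi_add:
  assumes "x \<in> vecs n" "y \<in> vecs n"
  shows "pi (vadd x y) = pi x + pi y"
proof -
  obtain m where m: "m \<in> M" "x = vadd (vsmult (pi x) u) m" using pi_ex[OF assms(1)] by blast
  obtain m' where m': "m' \<in> M" "y = vadd (vsmult (pi y) u) m'" using pi_ex[OF assms(2)] by blast
  have xi: "x i = pi x * u i + m i" for i using fun_cong[OF m(2), of i] by (simp add: vsimps)
  have yi: "y i = pi y * u i + m' i" for i using fun_cong[OF m'(2), of i] by (simp add: vsimps)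
  have "vadd x y = vadd (vsmult (pi x + pi y) u) (vadd m m')"
    by (rule ext) (simp add: xi yi vsimps algebra_simps)
  moreover have "pi x + pi y \<in> S" using sfadd[OF sf pi_S[OF assms(1)] pi_S[OF assms(2)]] .
  moreover have "vadd m m' \<in> M" using subsp_add[OF Msub m(1) m'(1)] .
  ultimately show ?thesis using pi_eq by metis
qed

lemma pi_smult:
  assumes "a \<in> S" "x \<in> vecs n"
  shows "pi (vsmult a x) = a * pi x"
proof -
  obtain m where m: "m \<in> M" "x = vadd (vsmult (pi x) u) m" using pi_ex[OF assms(2)] by blast
  have xi: "x i = pi x * u i + m i" for i using fun_cong[OF m(2), of i] by (simp add: vsimps)
  have "vsmult a x = vadd (vsmult (a * pi x) u) (vsmult a m)"
    by (rule ext) (simp add: xi vsimps algebra_simps)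
  moreover have "a * pi x \<in> S" using sfmult[OF sf assms(1) pi_S[OF assms(2)]] .
  moreover have "vsmult a m \<in> M" using subsp_smult[OF Msub assms(1) m(1)] .
  ultimately show ?thesis using pi_eq by metis
qed

lemma pi_M: "m \<in> M \<Longrightarrow> pi m = 0"
proof -
  assume m: "m \<in> M"
  have "m = vadd (vsmult 0 u) m" by (rule ext) (simp add: vsimps)
  then show "pi m = 0" using pi_eq[OF sf0[OF sf] m] by simp
qed

lemma pi_zeroD:
  assumes "x \<in> vecs n" "pi x = 0"
  shows "x \<in> M"
proof -
  obtain m where m: "m \<in> M" "x = vadd (vsmult (pi x) u) m" using pi_ex[OF assms(1)] by blast
  have xi: "x i = pi x * u i + m i" for i using fun_cong[OF m(2), of i] by (simp add: vsimps)
  have "x = m" using assms(2) by (intro ext) (simp add: xi)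
  then show ?thesis using m(1) by simp
qed

lemma diff_vecs: "x \<in> vecs n \<Longrightarrow> y \<in> vecs n \<Longrightarrow> (\<lambda>i. x i - y i) \<in> vecs n"
  by (simp add: vecs_mem)

lemma pi_diff:
  assumes "x \<in> vecs n" "y \<in> vecs n"
  shows "pi (\<lambda>i. x i - y i) = pi x - pi y"
proof -
  have "x = vadd (\<lambda>i. x i - y i) y" by (rule ext) (simp add: vsimps)
  then have "pi x = pi (\<lambda>i. x i - y i) + pi y" using pi_add[OF diff_vecs[OF assms] assms(2)] by simp
  then show ?thesis by simp
qed

definition core :: "(nat \<Rightarrow> 'a) set" where
  "core = {x \<in> vecs n. \<forall>c. pi (vsmult c x) = 0}"

lemma core_sub: "core \<subseteq> M"
proof
  fix x assume "x \<in> core"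
  then have "x \<in> vecs n" "pi (vsmult 1 x) = 0" unfolding core_def by blast+
  then show "x \<in> M" using pi_zeroD vsmult_one by metis
qed

lemma core_subsp: "subsp UNIV n core"
  unfolding subsp_def
proof (intro conjI ballI)
  show "core \<subseteq> vecs n" unfolding core_def by blast
  have "vzero \<in> M" using subsp_zero[OF Msub] .
  moreover have "vsmult c vzero = vzero" for c :: 'a by (rule ext) (simp add: vsimps)
  moreover have "vzero \<in> vecs n" by (simp add: vecs_mem vzero_apply)
  ultimately show "vzero \<in> core" unfolding core_def using pi_M by simp
next
  fix x y assume x: "x \<in> core" and y: "y \<in> core"
  then have xv: "x \<in> vecs n" and yv: "y \<in> vecs n" unfolding core_def by blast+
  have "pi (vsmult c (vadd x y)) = 0" for c
  proof -
    have "vsmult c (vadd x y) = vadd (vsmult c x) (vsmult c y)" by (rule ext) (simp add: vsimps algebra_simps)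
    then have "pi (vsmult c (vadd x y)) = pi (vsmult c x) + pi (vsmult c y)"
      using pi_add[OF vsmult_vecs[OF xv] vsmult_vecs[OF yv]] by simp
    then show ?thesis using x y unfolding core_def by simp
  qed
  then show "vadd x y \<in> core" unfolding core_def using vadd_vecs[OF xv yv] by blast
next
  fix k x assume x: "x \<in> core"
  then have xv: "x \<in> vecs n" unfolding core_def by blast
  have "pi (vsmult c (vsmult k x)) = 0" for c
    using x unfolding core_def vsmult_assoc by blast
  then show "vsmult k x \<in> core" unfolding core_def using vsmult_vecs[OF xv] by blast
qed

lemma pi_sum:
  assumes "finite E" "\<forall>e\<in>E. f e \<in> S" "z \<in> vecs n"
  shows "pi (vsmult (\<Sum>e\<in>E. f e * g e) z) = (\<Sum>e\<in>E. f e * pi (vsmult (g e) z))"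
  using assms(1,2)
proof (induction E rule: finite_induct)
  case empty
  have "vsmult 0 z = vzero" by (rule vsmult_zero)
  then show ?case using pi_M[OF subsp_zero[OF Msub]] by simp
next
  case (insert x F)
  have e: "vsmult (\<Sum>e\<in>insert x F. f e * g e) z = vadd (vsmult (f x) (vsmult (g x) z)) (vsmult (\<Sum>e\<in>F. f e * g e) z)"
    using insert(1,2) by (intro ext) (simp add: vsimps algebra_simps)
  have "pi (vsmult (\<Sum>e\<in>insert x F. f e * g e) z) = f x * pi (vsmult (g x) z) + pi (vsmult (\<Sum>e\<in>F. f e * g e) z)"
    unfolding e using pi_add[OF vsmult_vecs[OF vsmult_vecs[OF assms(3)]] vsmult_vecs[OF assms(3)]]
      pi_smult[OF _ vsmult_vecs[OF assms(3)]] insert(4) by simp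
  then show ?case using insert by simp
qed

lemma core_card:
  assumes E: "finite (E :: (nat \<Rightarrow> 'a) set)" "card E = t" "\<forall>k. \<exists>f. (\<forall>e\<in>E. f e \<in> S) \<and> k = (\<Sum>e\<in>E. f e * e 0)"
  shows "card (vecs n :: (nat \<Rightarrow> 'a) set) \<le> card (S :: 'a set) ^ t * card core"
proof -
  define \<Phi> where "\<Phi> x = restrict (\<lambda>e. pi (vsmult (e (0::nat)) x)) E" for x
  have \<Phi>S: "\<Phi> x \<in> E \<rightarrow>\<^sub>E S" if "x \<in> vecs n" for x
    unfolding \<Phi>_def using pi_S[OF vsmult_vecs[OF that]] by simp
  have fib: "(\<lambda>i. x i - y i) \<in> core" if xy: "x \<in> vecs n" "y \<in> vecs n" "\<Phi> x = \<Phi> y" for x y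
  proof -
    have dv: "(\<lambda>i. x i - y i) \<in> vecs n" using diff_vecs[OF xy(1,2)] .
    have "pi (vsmult c (\<lambda>i. x i - y i)) = 0" for c
    proof -
      obtain f where f: "\<forall>e\<in>E. f e \<in> S" "c = (\<Sum>e\<in>E. f e * e 0)" using E(3) by blast
      have "pi (vsmult c (\<lambda>i. x i - y i)) = (\<Sum>e\<in>E. f e * pi (vsmult (e 0) (\<lambda>i. x i - y i)))"
        unfolding f(2) by (rule pi_sum[OF E(1) f(1) dv])
      also have "\<dots> = 0"
      proof (rule sum.neutral, rule ballI)
        fix e assume eE: "e \<in> E"
        have "vsmult (e 0) (\<lambda>i. x i - y i) = (\<lambda>i. vsmult (e 0) x i - vsmult (e 0) y i)"
          by (rule ext) (simp add: vsimps algebra_simps)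
        then have "pi (vsmult (e 0) (\<lambda>i. x i - y i)) = pi (vsmult (e 0) x) - pi (vsmult (e 0) y)"
          using pi_diff[OF vsmult_vecs[OF xy(1)] vsmult_vecs[OF xy(2)]] by simp
        also have "\<dots> = 0" using fun_cong[OF xy(3), of e] eE unfolding \<Phi>_def by simp
        finally show "f e * pi (vsmult (e 0) (\<lambda>i. x i - y i)) = 0" by simp
      qed
      finally show ?thesis .
    qed
    then show ?thesis unfolding core_def using dv by blast
  qed
  have fc: "finite core" using finite_subsp[OF core_subsp] .
  have fibc: "card {x\<in>vecs n. \<Phi> x = y} \<le> card core" if yin: "y \<in> \<Phi> ` vecs n" for y
  proof -
    obtain x0 where x0': "y = \<Phi> x0" "x0 \<in> vecs n" using yin by (rule imageE)
    note x0 = x0'(2,1)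
    have "{x\<in>vecs n. \<Phi> x = y} \<subseteq> (\<lambda>c. vadd x0 c) ` core"
    proof
      fix x assume "x \<in> {x\<in>vecs n. \<Phi> x = y}"
      then have x: "x \<in> vecs n" "\<Phi> x = \<Phi> x0" using x0 by auto
      have "x = vadd x0 (\<lambda>i. x i - x0 i)" by (rule ext) (simp add: vsimps)
      moreover have "(\<lambda>i. x i - x0 i) \<in> core" using fib[OF x(1) x0(1) x(2)] .
      ultimately show "x \<in> (\<lambda>c. vadd x0 c) ` core" by blast
    qed
    then have "card {x\<in>vecs n. \<Phi> x = y} \<le> card ((\<lambda>c. vadd x0 c) ` core)"
      using fc by (intro card_mono) auto
    also have "\<dots> \<le> card core" using card_image_le[OF fc] .
    finally show ?thesis .
  qed
  have "card (vecs n :: (nat \<Rightarrow> 'a) set) \<le> card (\<Phi> ` vecs n) * card core"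
    by (rule card_fibers[OF finite_vecs fibc])
  also have "card (\<Phi> ` vecs n) \<le> card (E \<rightarrow>\<^sub>E S)"
    using \<Phi>S by (intro card_mono finite_PiE E(1)) auto
  also have "card (E \<rightarrow>\<^sub>E S) = card S ^ t" using card_PiE[OF E(1), of "\<lambda>_. S"] E(2) by simp
  finally show ?thesis by simp
qed

lemma core_hyperplane:
  assumes E: "finite (E :: (nat \<Rightarrow> 'a) set)" "card E = t" "\<forall>k. \<exists>f. (\<forall>e\<in>E. f e \<in> S) \<and> k = (\<Sum>e\<in>E. f e * e 0)"
    and Q: "card (UNIV :: 'a set) = card S ^ t"
  shows "has_dim UNIV n core (n - 1)"
proof -
  let ?Q = "card (UNIV :: 'a set)"
  obtain k where k: "card core = ?Q ^ k" using subsp_card_pow[OF subfield_UNIV core_subsp] by blast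
  have "2 \<le> ?Q" by (rule card_S_ge2[OF subfield_UNIV])
  then have Q2: "1 < ?Q" by simp
  have "M \<subset> vecs n" using subsp_vecs[OF Msub] uv uM by blast
  then have "card M < card (vecs n :: (nat \<Rightarrow> 'a) set)" using finite_vecs psubset_card_mono by blast
  moreover have "card core \<le> card M" using core_sub finite_subsp[OF Msub] card_mono by blast
  ultimately have "?Q ^ k < ?Q ^ n" using k card_vecs by (metis order.strict_trans1)
  then have kn: "k < n" using Q2 power_less_imp_less_exp by blast
  have "?Q ^ n \<le> ?Q * ?Q ^ k" using core_card[OF E] Q k card_vecs by metis
  then have "?Q ^ n \<le> ?Q ^ Suc k" by simp
  then have "n \<le> Suc k" using Q2 power_le_imp_le_exp by blast
  then have "k = n - 1" using kn by simp
  then show ?thesis using has_dim_of_card[OF subfield_UNIV core_subsp] k by simp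
qed

end


lemma K_basis:
  fixes S :: "'a::{field,finite} set"
  assumes "subfield S" "card (UNIV::'a set) = card S ^ t"
  shows "\<exists>E::(nat\<Rightarrow>'a) set. finite E \<and> card E = t \<and> (\<forall>k. \<exists>f. (\<forall>e\<in>E. f e \<in> S) \<and> k = (\<Sum>e\<in>E. f e * e 0))"
proof -
  have "card (vecs 1 :: (nat\<Rightarrow>'a) set) = card S ^ t" using card_vecs[where 'a='a, of 1] assms(2) by simp
  then have "has_dim S 1 (vecs 1 :: (nat\<Rightarrow>'a) set) t" by (rule has_dim_of_card[OF assms(1) subsp_vecs_full])
  then obtain E where E: "finite E" "E \<subseteq> vecs 1" "card E = t" "span_over S E = (vecs 1 :: (nat\<Rightarrow>'a) set)"
    unfolding has_dim_def by blast
  have "\<exists>f. (\<forall>e\<in>E. f e \<in> S) \<and> k = (\<Sum>e\<in>E. f e * e 0)" for k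
  proof -
    let ?v = "\<lambda>i::nat. if i = 0 then k else 0"
    have "?v \<in> vecs 1" by (simp add: vecs_mem)
    then have "?v \<in> span_over S E" using E(4) by simp
    then obtain c where c: "\<forall>a\<in>E. c a \<in> S" "?v = lin_comb E c" unfolding span_over_def by blast
    have "k = lin_comb E c 0" using fun_cong[OF c(2), of 0] by simp
    then have "k = (\<Sum>e\<in>E. c e * e 0)" by (simp add: lin_comb_apply)
    then show ?thesis using c(1) by blast
  qed
  then show ?thesis using E by blast
qed

lemma key:
  fixes W :: "(nat \<Rightarrow> 'a::{field,finite}) set"
  assumes "subfield S" "card (UNIV::'a set) = card S ^ t" "subsp S n W" "W \<noteq> vecs n"
  shows "\<exists>C M. has_dim UNIV n C (n - 1) \<and> subsp S n M \<and> W \<subseteq> M \<and> C \<subseteq> M \<and> M \<noteq> vecs n"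
proof -
  obtain M where M: "subsp S n M" "W \<subseteq> M" "M \<noteq> vecs n" "card (vecs n :: (nat \<Rightarrow> 'a) set) = card S * card M"
    using hyperplane_exists[OF assms(1,3,4)] by blast
  obtain u where u: "u \<in> vecs n" "u \<notin> M" using M(1,3) subsp_vecs by blast
  have sub: "sumline M u S \<subseteq> vecs n" using subsp_vecs[OF sumline_subsp[OF assms(1) M(1) u(1)]] .
  have "card (sumline M u S) = card S * card M"
    using card_sumline[OF assms(1) M(1) u(2) finite finite_subsp[OF M(1)]] .
  then have "card (sumline M u S) = card (vecs n :: (nat \<Rightarrow> 'a) set)" using M(4) by simp
  then have full: "sumline M u S = vecs n" by (rule card_subset_eq[OF finite_vecs sub])
  have HY: "hyp S n M u" by (rule hyp.intro[OF assms(1) M(1) u(1) u(2) full])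
  obtain E :: "(nat \<Rightarrow> 'a) set" where E: "finite E" "card E = t" "\<forall>k. \<exists>f. (\<forall>e\<in>E. f e \<in> S) \<and> k = (\<Sum>e\<in>E. f e * e 0)"
    using K_basis[OF assms(1,2)] by blast
  have "has_dim UNIV n (hyp.core S n M u) (n - 1)" using hyp.core_hyperplane[OF HY E assms(2)] .
  moreover have "hyp.core S n M u \<subseteq> M" using hyp.core_sub[OF HY] .
  ultimately show ?thesis using M(1,2,3) by blast
qed

lemma subsp_mono: "subsp UNIV n P \<Longrightarrow> subsp S n P"
  unfolding subsp_def by blast

lemma same_point:
  assumes "subfield F" "has_dim UNIV n P 1" "has_dim UNIV n P0 1" "has_dim F n Q 1" "Q \<subseteq> P" "Q \<subseteq> P0"
  shows "P = P0"
proof -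
  obtain v where v: "v \<in> vecs n" "v \<noteq> vzero" "Q = line F v" using point_line[OF assms(4,1)] by blast
  have vQ: "v \<in> Q" using v(3) line_mem[OF assms(1)] by blast
  obtain a where a: "P = line UNIV a" using point_line[OF assms(2) subfield_UNIV] by blast
  obtain b where b: "P0 = line UNIV b" using point_line[OF assms(3) subfield_UNIV] by blast
  have "line UNIV v = P" using line_UNIV_eq[of v a] vQ assms(5) v(2) a by blast
  moreover have "line UNIV v = P0" using line_UNIV_eq[of v b] vQ assms(6) v(2) b by blast
  ultimately show ?thesis by simp
qed

theorem theorem5p1:
  fixes F :: "'a::{field,finite} set" and n t :: nat
    and B :: "(nat \<Rightarrow> 'a) set set"
  assumes "subfield F"
    and "n \<ge> 2" and "t \<ge> 1"
    and "card (UNIV :: 'a set) = card F ^ t"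
    and "min_blocking UNIV n (n - 1) B"
  shows "\<exists>B'. min_blocking F n (n * t - t) B' \<and> B = BU n B'"
proof -
  note sf = assms(1)
  let ?q = "card F"
  let ?V = "vecs n :: (nat \<Rightarrow> 'a) set"
  have q2: "1 < ?q" using card_S_ge2[OF sf] by simp
  have Bpts: "B \<subseteq> proj_points UNIV n"
    and Bbl: "\<And>H. has_dim UNIV n H (n - 1) \<Longrightarrow> \<exists>P\<in>B. P \<subseteq> H"
    and Bmin: "\<And>B0. B0 \<subset> B \<Longrightarrow> \<not> blocks UNIV n (n - 1) B0"
    using assms(5) unfolding min_blocking_def blocks_def by blast+
  have dims: "n * t - t = (n - 1) * t" by (simp add: diff_mult_distrib)
  have "card ?V = (?q ^ t) ^ n" using card_vecs[where 'a='a, of n] assms(4) by simp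
  then have cV: "card ?V = ?q ^ (n * t)" by (metis power_mult mult.commute)
  define B'' where "B'' = {Q \<in> proj_points F n. \<exists>P\<in>B. Q \<subseteq> P}"
  have B''bl: "blocks F n ((n - 1) * t) B''"
    unfolding blocks_def
  proof (intro conjI allI impI)
    show "B'' \<subseteq> proj_points F n" unfolding B''_def by blast
    fix W assume W: "has_dim F n W ((n - 1) * t)"
    have Ws: "subsp F n W" using W unfolding has_dim_def by blast
    have cW: "card W = ?q ^ ((n - 1) * t)" using has_dim_card[OF sf finite W] .
    have lt: "(n - 1) * t < n * t" using assms(2,3) by simp
    have "card W < card ?V" unfolding cW cV using q2 lt by (simp add: power_strict_increasing)
    then have WV: "W \<noteq> ?V" by auto
    obtain C M where CM: "has_dim UNIV n C (n - 1)" "subsp F n M" "W \<subseteq> M" "C \<subseteq> M" "M \<noteq> ?V"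
      using key[OF sf assms(4) Ws WV] by blast
    obtain P where P: "P \<in> B" "P \<subseteq> C" using Bbl[OF CM(1)] by blast
    have Pd: "has_dim UNIV n P 1" using P(1) Bpts unfolding proj_points_def by blast
    have PsU: "subsp UNIV n P" using Pd unfolding has_dim_def by blast
    have Ps: "subsp F n P" using subsp_mono[OF PsU] .
    have cP: "card P = ?q ^ t" using has_dim_card[OF subfield_UNIV finite Pd] assms(4) by simp
    have "\<exists>v\<in>P \<inter> W. v \<noteq> vzero"
    proof (rule ccontr)
      assume "\<not> (\<exists>v\<in>P \<inter> W. v \<noteq> vzero)"
      then have PW: "P \<inter> W \<subseteq> {vzero}" by blast
      have "card (vplus P W) = card P * card W"
        using card_vplus[OF sf Ps Ws PW finite_subsp[OF Ps] finite_subsp[OF Ws]] .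
      also have "\<dots> = ?q ^ (t + (n - 1) * t)" unfolding cP cW by (simp add: power_add)
      also have "t + (n - 1) * t = n * t" using assms(2) by (cases n) auto
      finally have c1: "card (vplus P W) = card ?V" using cV by simp
      have "vplus P W \<subseteq> M" using vplus_sub[OF CM(2)] P(2) CM(3,4) by blast
      then have "card (vplus P W) \<le> card M" using finite_subsp[OF CM(2)] card_mono by blast
      moreover have "M \<subset> ?V" using subsp_vecs[OF CM(2)] CM(5) by blast
      then have "card M < card ?V" using finite_vecs psubset_card_mono by blast
      ultimately show False using c1 by simp
    qed
    then obtain v where v: "v \<in> P" "v \<in> W" "v \<noteq> vzero" by blast
    have vV: "v \<in> ?V" using v(1) subsp_vecs[OF Ps] by blast
    have "line F v \<in> proj_points F n" unfolding proj_points_def using line_point[OF sf vV v(3)] by simp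
    moreover have "line F v \<subseteq> P" using line_sub[OF Ps v(1)] .
    ultimately have "line F v \<in> B''" unfolding B''_def using P(1) by blast
    moreover have "line F v \<subseteq> W" using line_sub[OF Ws v(2)] .
    ultimately show "\<exists>Q\<in>B''. Q \<subseteq> W" by blast
  qed
  have "B'' \<subseteq> Pow ?V"
  proof
    fix Q assume "Q \<in> B''"
    then have "has_dim F n Q 1" unfolding B''_def proj_points_def by blast
    then show "Q \<in> Pow ?V" using subsp_vecs unfolding has_dim_def by blast
  qed
  then have fB'': "finite B''" using finite_vecs finite_subset by (metis finite_Pow_iff)
  let ?X = "{X. X \<subseteq> B'' \<and> blocks F n ((n - 1) * t) X}"
  have "?X \<subseteq> Pow B''" by blast
  then have fX: "finite ?X" using fB'' finite_subset by (metis finite_Pow_iff)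
  have "B'' \<in> ?X" using B''bl by blast
  define m where "m = Min (card ` ?X)"
  have "m \<in> card ` ?X" unfolding m_def using fX \<open>B'' \<in> ?X\<close> by (intro Min_in) auto
  then obtain B' where B': "B' \<in> ?X" "card B' = m" by blast
  have B'min: "card B' \<le> card X" if "X \<in> ?X" for X
    using B'(2) fX that unfolding m_def by (simp add: Min_le)
  have B'sub: "B' \<subseteq> B''" and B'bl: "blocks F n ((n - 1) * t) B'" using B'(1) by auto
  have fB': "finite B'" using B'sub fB'' finite_subset by blast
  have minb: "min_blocking F n (n * t - t) B'"
    unfolding min_blocking_def dims
  proof (intro conjI allI impI)
    show "blocks F n ((n - 1) * t) B'" by (rule B'bl)
    fix B0 assume B0: "B0 \<subset> B'"
    show "\<not> blocks F n ((n - 1) * t) B0"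
    proof
      assume "blocks F n ((n - 1) * t) B0"
      then have "B0 \<in> ?X" using B0 B'sub by blast
      then have "card B' \<le> card B0" by (rule B'min)
      moreover have "card B0 < card B'" using psubset_card_mono[OF fB' B0] .
      ultimately show False by simp
    qed
  qed
  have inB'': "Q \<in> proj_points F n \<and> (\<exists>P\<in>B. Q \<subseteq> P)" if "Q \<in> B'" for Q
    using that B'sub unfolding B''_def by blast
  have BU_sub: "BU n B' \<subseteq> B"
  proof
    fix P assume "P \<in> BU n B'"
    then obtain Q where PQ: "P \<in> proj_points UNIV n" "Q \<in> B'" "Q \<subseteq> P" unfolding BU_def by blast
    obtain P0 where P0: "P0 \<in> B" "Q \<subseteq> P0" using inB''[OF PQ(2)] by blast
    have d1: "has_dim UNIV n P 1" using PQ(1) unfolding proj_points_def by simp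
    have d2: "has_dim UNIV n P0 1" using P0(1) Bpts unfolding proj_points_def by blast
    have d3: "has_dim F n Q 1" using inB''[OF PQ(2)] unfolding proj_points_def by simp
    have "P = P0" by (rule same_point[OF sf d1 d2 d3 PQ(3) P0(2)])
    then show "P \<in> B" using P0(1) by simp
  qed
  have BU_bl: "blocks UNIV n (n - 1) (BU n B')"
    unfolding blocks_def
  proof (intro conjI allI impI)
    show "BU n B' \<subseteq> proj_points UNIV n" unfolding BU_def by blast
    fix H :: "(nat \<Rightarrow> 'a) set" assume H: "has_dim UNIV n H (n - 1)"
    have HsU: "subsp UNIV n H" using H unfolding has_dim_def by blast
    have fU: "finite (UNIV::'a set)" by simp
    have "card H = card (UNIV::'a set) ^ (n - 1)" using has_dim_card[OF subfield_UNIV fU H] .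
    then have "card H = (?q ^ t) ^ (n - 1)" using assms(4) by simp
    then have "card H = ?q ^ ((n - 1) * t)" by (metis power_mult mult.commute)
    then have HF: "has_dim F n H ((n - 1) * t)" by (rule has_dim_of_card[OF sf subsp_mono[OF HsU]])
    obtain Q where Q: "Q \<in> B'" "Q \<subseteq> H" using B'bl HF unfolding blocks_def by blast
    obtain P0 where P0: "P0 \<in> B" "Q \<subseteq> P0" using inB''[OF Q(1)] by blast
    have Qd: "has_dim F n Q 1" using inB''[OF Q(1)] unfolding proj_points_def by blast
    obtain v where v: "v \<in> vecs n" "v \<noteq> vzero" "Q = line F v" using point_line[OF Qd sf] by blast
    have vQ: "v \<in> Q" using v(3) line_mem[OF sf] by blast
    have P0d: "has_dim UNIV n P0 1" using P0(1) Bpts unfolding proj_points_def by blast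
    obtain a where a: "P0 = line UNIV a" using point_line[OF P0d subfield_UNIV] by blast
    have "line UNIV v = P0" using line_UNIV_eq[of v a] vQ P0(2) v(2) a by blast
    moreover have "line UNIV v \<subseteq> H" using line_sub[OF HsU] vQ Q(2) by blast
    ultimately have "P0 \<subseteq> H" by simp
    moreover have "P0 \<in> BU n B'" unfolding BU_def using P0d Q(1) P0(2) unfolding proj_points_def by blast
    ultimately show "\<exists>P\<in>BU n B'. P \<subseteq> H" by blast
  qed
  have "B = BU n B'"
  proof (rule ccontr)
    assume "B \<noteq> BU n B'"
    then have "BU n B' \<subset> B" using BU_sub by blast
    then show False using Bmin[of "BU n B'"] BU_bl by simp
  qed
  then show ?thesis using minb by blast
qed

end
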